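(* Let $(H,L_H)$ be a right-resolving labeled graph presenting $Y=L_H(X_H)$, and let $x\in X_H$. Then $L_H : \mathbb U(x) \to \mathbb U(L_H(x))$ is surjective if and only if $$\{ L_H(\mu) : \mu \in X_H[0,\infty),\ s_H(\mu) = t_H(x_{(-\infty, k]})\} = \{ y \in Y[0,\infty): L_H(x_{(-\infty,k]})y \in Y \}$$ holds for all $k \in \mathbb Z$.
   Context: A labeled graph $(H,L_H)$: finite directed graph (vertices $V_H$, edges $E_H$, source/terminal maps $s_H,t_H$) without sinks or sources, labeling $L_H:E_H\to A$, edge shift $X_H$; $L_H$ acts coordinatewise on paths. $X_H[0,\infty)$ denotes right-infinite paths $e_0e_1\cdots$ and $s_H$ of such a path is the source of its first edge; $x_{(-\infty,k]}=\cdots x_{k-1}x_k$ and $t_H$ of it is the terminal vertex of $x_k$; $Y[0,\infty)=\{y_{[0,\infty)}:y\in Y\}$. Right-resolving: distinct edges with the same source have distinct labels. For a subshift $X$ and $x\in X$, $\mathbb U(x)=\{z\in X:\exists N\in\mathbb Z\ \forall i\le N,\ z_i=x_i\}$. *)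

theory Defs
  imports Main
begin

definition essential_graph :: "'v set \<Rightarrow> 'e set \<Rightarrow> ('e \<Rightarrow> 'v) \<Rightarrow> ('e \<Rightarrow> 'v) \<Rightarrow> bool" where
  "essential_graph V E s t \<longleftrightarrow> finite V \<and> finite E \<and> s ` E \<subseteq> V \<and> t ` E \<subseteq> V \<and>
     (\<forall>v\<in>V. \<exists>e\<in>E. s e = v) \<and> (\<forall>v\<in>V. \<exists>e\<in>E. t e = v)"

definition edge_shift :: "'e set \<Rightarrow> ('e \<Rightarrow> 'v) \<Rightarrow> ('e \<Rightarrow> 'v) \<Rightarrow> (int \<Rightarrow> 'e) set" where
  "edge_shift E s t = {x. (\<forall>i. x i \<in> E) \<and> (\<forall>i. t (x i) = s (x (i + 1)))}"

definition right_paths :: "'e set \<Rightarrow> ('e \<Rightarrow> 'v) \<Rightarrow> ('e \<Rightarrow> 'v) \<Rightarrow> (nat \<Rightarrow> 'e) set" where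
  "right_paths E s t = {\<mu>. (\<forall>n. \<mu> n \<in> E) \<and> (\<forall>n. t (\<mu> n) = s (\<mu> (Suc n)))}"

definition right_resolving :: "'e set \<Rightarrow> ('e \<Rightarrow> 'v) \<Rightarrow> ('e \<Rightarrow> 'a) \<Rightarrow> bool" where
  "right_resolving E s L \<longleftrightarrow> (\<forall>e\<in>E. \<forall>f\<in>E. e \<noteq> f \<and> s e = s f \<longrightarrow> L e \<noteq> L f)"

definition unstable_set :: "(int \<Rightarrow> 'b) set \<Rightarrow> (int \<Rightarrow> 'b) \<Rightarrow> (int \<Rightarrow> 'b) set" where
  "unstable_set X x = {z \<in> X. \<exists>N. \<forall>i\<le>N. z i = x i}"

definition right_half :: "(int \<Rightarrow> 'b) set \<Rightarrow> (nat \<Rightarrow> 'b) set" where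
  "right_half Y = {(\<lambda>n. y (int n)) | y. y \<in> Y}"

text \<open>Concatenation w_(-\<infinity>,k] y of a left-infinite word (the part of w at indices \<le> k)
  with a right-infinite word y, placed so that y_0 sits at index k+1.\<close>
definition concat_at :: "int \<Rightarrow> (int \<Rightarrow> 'b) \<Rightarrow> (nat \<Rightarrow> 'b) \<Rightarrow> (int \<Rightarrow> 'b)" where
  "concat_at k w y = (\<lambda>i. if i \<le> k then w i else y (nat (i - k - 1)))"

end

theory Submission
  imports Defs
begin

lemma shift_in:
  assumes "z \<in> edge_shift E s t"
  shows "(\<lambda>i. z (i + m)) \<in> edge_shift E s t"
  using assms unfolding edge_shift_def by (simp add: algebra_simps)

lemma concat_in:
  assumes "x \<in> edge_shift E s t" "\<mu> \<in> right_paths E s t" "s (\<mu> 0) = t (x k)"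
  shows "concat_at k x \<mu> \<in> edge_shift E s t"
proof -
  have E: "\<forall>i. concat_at k x \<mu> i \<in> E"
    using assms unfolding edge_shift_def right_paths_def concat_at_def by auto
  have "t (concat_at k x \<mu> i) = s (concat_at k x \<mu> (i + 1))" for i
  proof (cases "i < k")
    case True then show ?thesis using assms(1) unfolding edge_shift_def concat_at_def by auto
  next
    case False
    show ?thesis
    proof (cases "i = k")
      case True then show ?thesis using assms(3) unfolding concat_at_def by simp
    next
      case F2: False
      then have "nat (i + 1 - k - 1) = Suc (nat (i - k - 1))" using False by simp
      then show ?thesis using False F2 assms(2) unfolding concat_at_def right_paths_def by auto
    qed
  qed
  then show ?thesis using E unfolding edge_shift_def by auto
qed

lemma tail_path:
  assumes "z \<in> edge_shift E s t"
  shows "(\<lambda>n. z (k + 1 + int n)) \<in> right_paths E s t"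
  using assms unfolding edge_shift_def right_paths_def by (auto simp: algebra_simps)

lemma rr_agree:
  assumes rr: "right_resolving E s L" and x: "x \<in> edge_shift E s t" and z: "z \<in> edge_shift E s t"
    and N: "\<forall>i\<le>N. z i = x i" and Lk: "\<forall>i\<le>k. L (z i) = L (x i)"
  shows "\<forall>i\<le>k. z i = x i"
proof -
  have IND: "N + int n \<le> k \<longrightarrow> z (N + int n) = x (N + int n)" for n
  proof (induction n)
    case 0 then show ?case using N by simp
  next
    case (Suc n)
    show ?case
    proof
      assume h: "N + int (Suc n) \<le> k"
      let ?j = "N + int n"
      have eq: "z ?j = x ?j" using Suc h by simp
      have "s (z (?j + 1)) = s (x (?j + 1))"
      proof -
        have "s (z (?j + 1)) = t (z ?j)" using z unfolding edge_shift_def by simp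
        also have "\<dots> = t (x ?j)" using eq by simp
        also have "\<dots> = s (x (?j + 1))" using x unfolding edge_shift_def by simp
        finally show ?thesis .
      qed
      moreover have "L (z (?j + 1)) = L (x (?j + 1))" using Lk h by simp
      moreover have "z (?j + 1) \<in> E" "x (?j + 1) \<in> E" using x z unfolding edge_shift_def by auto
      ultimately have "z (?j + 1) = x (?j + 1)" using rr unfolding right_resolving_def by blast
      then show "z (N + int (Suc n)) = x (N + int (Suc n))" by (simp add: algebra_simps)
    qed
  qed
  show ?thesis
  proof (intro allI impI)
    fix i assume ik: "i \<le> k"
    show "z i = x i"
    proof (cases "i \<le> N")
      case True then show ?thesis using N by simp
    next
      case False
      then obtain n where "i = N + int n" by (metis le_add_diff_inverse nle_le zle_iff_zadd)
      then show ?thesis using IND[of n] ik by simp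
    qed
  qed
qed

theorem lemma2p5:
  fixes V :: "'v set" and E :: "'e set" and s t :: "'e \<Rightarrow> 'v" and L :: "'e \<Rightarrow> 'a"
    and x :: "int \<Rightarrow> 'e"
  assumes "essential_graph V E s t"
    and "right_resolving E s L"
    and "x \<in> edge_shift E s t"
  shows "((\<lambda>z. L \<circ> z) ` unstable_set (edge_shift E s t) x
            = unstable_set ((\<lambda>z. L \<circ> z) ` edge_shift E s t) (L \<circ> x))
         \<longleftrightarrow>
         (\<forall>k::int.
            {L \<circ> \<mu> | \<mu>. \<mu> \<in> right_paths E s t \<and> s (\<mu> 0) = t (x k)}
            = {y \<in> right_half ((\<lambda>z. L \<circ> z) ` edge_shift E s t).
                 concat_at k (L \<circ> x) y \<in> (\<lambda>z. L \<circ> z) ` edge_shift E s t})"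
proof -
  let ?X = "edge_shift E s t"
  let ?Y = "(\<lambda>z. L \<circ> z) ` ?X"
  have sub1: "(\<lambda>z. L \<circ> z) ` unstable_set ?X x \<subseteq> unstable_set ?Y (L \<circ> x)"
  proof
    fix w assume "w \<in> (\<lambda>z. L \<circ> z) ` unstable_set ?X x"
    then obtain z N where "z \<in> ?X" "\<forall>i\<le>N. z i = x i" "w = L \<circ> z"
      unfolding unstable_set_def by auto
    then have "w \<in> ?Y" "\<forall>i\<le>N. w i = (L \<circ> x) i" by auto
    then show "w \<in> unstable_set ?Y (L \<circ> x)" unfolding unstable_set_def by blast
  qed
  have sub2: "{L \<circ> \<mu> | \<mu>. \<mu> \<in> right_paths E s t \<and> s (\<mu> 0) = t (x k)}
     \<subseteq> {y \<in> right_half ?Y. concat_at k (L \<circ> x) y \<in> ?Y}" for k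
  proof
    fix y assume "y \<in> {L \<circ> \<mu> | \<mu>. \<mu> \<in> right_paths E s t \<and> s (\<mu> 0) = t (x k)}"
    then obtain \<mu> where mu: "\<mu> \<in> right_paths E s t" "s (\<mu> 0) = t (x k)" and y: "y = L \<circ> \<mu>" by auto
    have c: "concat_at k x \<mu> \<in> ?X" using concat_in[OF assms(3) mu] .
    have "(\<lambda>i. concat_at k x \<mu> (i + (k + 1))) \<in> ?X" using shift_in[OF c] .
    moreover have "y = (\<lambda>n. (L \<circ> (\<lambda>i. concat_at k x \<mu> (i + (k + 1)))) (int n))"
      using y by (auto simp: concat_at_def)
    ultimately have "y \<in> right_half ?Y" unfolding right_half_def by blast
    moreover have "concat_at k (L \<circ> x) y = L \<circ> concat_at k x \<mu>"
      using y by (auto simp: concat_at_def)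
    ultimately show "y \<in> {y \<in> right_half ?Y. concat_at k (L \<circ> x) y \<in> ?Y}" using c by auto
  qed
  show ?thesis
  proof
    assume H: "(\<lambda>z. L \<circ> z) ` unstable_set ?X x = unstable_set ?Y (L \<circ> x)"
    show "\<forall>k. {L \<circ> \<mu> | \<mu>. \<mu> \<in> right_paths E s t \<and> s (\<mu> 0) = t (x k)}
            = {y \<in> right_half ?Y. concat_at k (L \<circ> x) y \<in> ?Y}"
    proof
      fix k
      have "{y \<in> right_half ?Y. concat_at k (L \<circ> x) y \<in> ?Y}
         \<subseteq> {L \<circ> \<mu> | \<mu>. \<mu> \<in> right_paths E s t \<and> s (\<mu> 0) = t (x k)}"
      proof
        fix y assume "y \<in> {y \<in> right_half ?Y. concat_at k (L \<circ> x) y \<in> ?Y}"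
        then have wY: "concat_at k (L \<circ> x) y \<in> ?Y" by auto
        let ?w = "concat_at k (L \<circ> x) y"
        have "?w \<in> unstable_set ?Y (L \<circ> x)"
          using wY unfolding unstable_set_def by (auto simp: concat_at_def)
        then have "?w \<in> (\<lambda>z. L \<circ> z) ` unstable_set ?X x" unfolding H .
        then obtain z where z: "z \<in> unstable_set ?X x" and wz: "?w = L \<circ> z" by blast
        from z obtain N where zX: "z \<in> ?X" and N: "\<forall>i\<le>N. z i = x i"
          unfolding unstable_set_def by auto
        have Lk: "\<forall>i\<le>k. L (z i) = L (x i)"
        proof (intro allI impI)
          fix i assume "i \<le> k"
          then show "L (z i) = L (x i)" using fun_cong[OF wz, of i] by (simp add: concat_at_def)
        qed
        have zk: "z k = x k" using rr_agree[OF assms(2) assms(3) zX N Lk] by simp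
        let ?\<mu> = "\<lambda>n. z (k + 1 + int n)"
        have mu: "?\<mu> \<in> right_paths E s t" using tail_path[OF zX] .
        have "t (z k) = s (z (k + 1))" using zX unfolding edge_shift_def by blast
        then have "s (?\<mu> 0) = t (x k)" using zk by simp
        moreover have "y = L \<circ> ?\<mu>"
        proof
          fix n
          have "?w (k + 1 + int n) = L (z (k + 1 + int n))" using wz by simp
          then show "y n = (L \<circ> ?\<mu>) n" by (simp add: concat_at_def)
        qed
        ultimately show "y \<in> {L \<circ> \<mu> | \<mu>. \<mu> \<in> right_paths E s t \<and> s (\<mu> 0) = t (x k)}"
          using mu by blast
      qed
      then show "{L \<circ> \<mu> | \<mu>. \<mu> \<in> right_paths E s t \<and> s (\<mu> 0) = t (x k)}
            = {y \<in> right_half ?Y. concat_at k (L \<circ> x) y \<in> ?Y}" using sub2 by blast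
    qed
  next
    assume H: "\<forall>k. {L \<circ> \<mu> | \<mu>. \<mu> \<in> right_paths E s t \<and> s (\<mu> 0) = t (x k)}
            = {y \<in> right_half ?Y. concat_at k (L \<circ> x) y \<in> ?Y}"
    have "unstable_set ?Y (L \<circ> x) \<subseteq> (\<lambda>z. L \<circ> z) ` unstable_set ?X x"
    proof
      fix w assume "w \<in> unstable_set ?Y (L \<circ> x)"
      then obtain N v where v: "v \<in> ?X" and wv: "w = L \<circ> v" and N: "\<forall>i\<le>N. w i = (L \<circ> x) i"
        unfolding unstable_set_def by auto
      let ?y = "\<lambda>n. w (N + 1 + int n)"
      have "(\<lambda>i. v (i + (N + 1))) \<in> ?X" using shift_in[OF v] .
      moreover have "?y = (\<lambda>n. (L \<circ> (\<lambda>i. v (i + (N + 1)))) (int n))"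
      proof
        fix n show "?y n = (L \<circ> (\<lambda>i. v (i + (N + 1)))) (int n)"
          using wv by (simp add: add.commute add.left_commute)
      qed
      ultimately have "?y \<in> right_half ?Y" unfolding right_half_def
        by (intro CollectI exI[of _ "L \<circ> (\<lambda>i. v (i + (N + 1)))"]) blast
      moreover have "concat_at N (L \<circ> x) ?y = w"
      proof
        fix i show "concat_at N (L \<circ> x) ?y i = w i"
        proof (cases "i \<le> N")
          case True then show ?thesis using N by (simp add: concat_at_def)
        next
          case False
          have e: "N + 1 + int (nat (i - N - 1)) = i" using False by simp
          show ?thesis using False by (simp add: concat_at_def e)
        qed
      qed
      moreover have "w \<in> ?Y" using v wv by blast
      ultimately have memB: "?y \<in> {y \<in> right_half ?Y. concat_at N (L \<circ> x) y \<in> ?Y}"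
        by simp
      have eqN: "{L \<circ> \<mu> | \<mu>. \<mu> \<in> right_paths E s t \<and> s (\<mu> 0) = t (x N)}
            = {y \<in> right_half ?Y. concat_at N (L \<circ> x) y \<in> ?Y}" using H by (rule spec)
      have "?y \<in> {L \<circ> \<mu> | \<mu>. \<mu> \<in> right_paths E s t \<and> s (\<mu> 0) = t (x N)}"
        unfolding eqN by (rule memB)
      then obtain \<mu> where mu: "\<mu> \<in> right_paths E s t" "s (\<mu> 0) = t (x N)" and ym: "?y = L \<circ> \<mu>"
        by blast
      have c: "concat_at N x \<mu> \<in> ?X" using concat_in[OF assms(3) mu] .
      have "\<forall>i\<le>N. concat_at N x \<mu> i = x i" by (simp add: concat_at_def)
      then have "concat_at N x \<mu> \<in> unstable_set ?X x"
        using c unfolding unstable_set_def by blast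
      moreover have "w = L \<circ> concat_at N x \<mu>"
      proof
        fix i show "w i = (L \<circ> concat_at N x \<mu>) i"
        proof (cases "i \<le> N")
          case True
          then have "w i = (L \<circ> x) i" using N by blast
          then show ?thesis using True by (simp add: concat_at_def)
        next
          case False
          have e: "N + 1 + int (nat (i - N - 1)) = i" using False by simp
          have "w i = ?y (nat (i - N - 1))" by (simp only: e)
          also have "\<dots> = L (\<mu> (nat (i - N - 1)))" using fun_cong[OF ym, of "nat (i - N - 1)"] by simp
          finally show ?thesis using False by (simp add: concat_at_def)
        qed
      qed
      ultimately show "w \<in> (\<lambda>z. L \<circ> z) ` unstable_set ?X x" by blast
    qed
    then show "(\<lambda>z. L \<circ> z) ` unstable_set ?X x = unstable_set ?Y (L \<circ> x)" using sub1 by blast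
  qed
qed

end
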